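(* Let $D$ be a distribution over $\mathcal{X}\times\mathcal{Y}$, $\mathcal{X}\subset\mathbb{R}^d$, $\mathcal{Y}=\{1,\dots,c\}$, that is $k$-separable with $\delta$-margin. Then there is a 2-layer network $g:\mathcal{X}\to\mathbb{R}^c$ of the form $g(x)=W^T\big(\rho(u^Tx-\beta_1),\dots,\rho(u^Tx-\beta_k)\big)^T$ with $u\in\mathbb{R}^d$, $\beta_1,\dots,\beta_k\in\mathbb{R}$, $W\in\mathbb{R}^{k\times c}$ (hence $d+(c+1)k$ parameters) that classifies perfectly: with probability $1$ over $(x,y)\sim D$, the index $y$ is the unique maximizer of $j\mapsto g_j(x)$ over $j\in\{1,\dots,c\}$.
   Context: $\rho(t)=1/(1+e^{-t})$ is the sigmoid function. Definition ($k$-separable with $\delta$-margin): Let $\mathcal{X}\subset\mathbb{R}^d$ and $\mathcal{Y}=\{1,\dots,c\}$. A distribution $D$ over $\mathcal{X}\times\mathcal{Y}$ is $k$-separable with $\delta$-margin ($\delta>0$) if there exist a projection vector $a\in\mathbb{R}^d$ with $\|a\|_2=1$ and constants $b_1<b_2<\cdots<b_{k+1}$ such that, setting $\mathcal{X}_i=\{x\in\mathcal{X}: b_i+\delta<a^Tx<b_{i+1}-\delta\}$ for $i\in\{1,\dots,k\}$: (i) for each $i$ there is $y_i\in\mathcal{Y}$ with $\mathbb{P}_{(x,y)\sim D}(y=y_i\mid x\in\mathcal{X}_i)=1$; (ii) $\mathbb{P}_{(x,y)\sim D}\big(x\in\bigcup_{i=1}^k\mathcal{X}_i\big)=1$. 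*)

theory Defs
  imports "HOL-Probability.Probability"
begin

definition sigmoid :: "real \<Rightarrow> real" where
  "sigmoid t = 1 / (1 + exp (- t))"

definition slab :: "(real^'d) set \<Rightarrow> real^'d \<Rightarrow> (nat \<Rightarrow> real) \<Rightarrow> real \<Rightarrow> nat \<Rightarrow> (real^'d) set" where
  "slab X a b \<delta> i = {x \<in> X. b i + \<delta> < a \<bullet> x \<and> a \<bullet> x < b (Suc i) - \<delta>}"

definition k_separable_margin ::
  "((real^'d) \<times> nat) measure \<Rightarrow> (real^'d) set \<Rightarrow> nat \<Rightarrow> nat \<Rightarrow> real \<Rightarrow> bool" where
  "k_separable_margin D X c k \<delta> \<longleftrightarrow> \<delta> > 0 \<and>
     (\<exists>(a::real^'d) (b::nat \<Rightarrow> real).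
        norm a = 1 \<and> strict_mono_on {1..k+1} b \<and>
        (\<forall>i\<in>{1..k}. \<exists>yi\<in>{1..c}.
            AE z in D. fst z \<in> slab X a b \<delta> i \<longrightarrow> snd z = yi) \<and>
        (AE z in D. fst z \<in> (\<Union>i\<in>{1..k}. slab X a b \<delta> i)))"

end

theory Submission
  imports Defs
begin

definition Wd :: "(nat \<Rightarrow> nat) \<Rightarrow> nat \<Rightarrow> nat \<Rightarrow> real" where
 "Wd y i j = (if y i = j then 1 else 0) - (if 2 \<le> i \<and> y (i-1) = j then 1 else 0)"
definition ee :: "nat \<Rightarrow> (nat \<Rightarrow> real) \<Rightarrow> nat \<Rightarrow> real" where
 "ee n f i = f i - (if i < n then f (Suc i) else 0)"

lemma ident: "(\<Sum>i=1..n. Wd y i j * f i) = (\<Sum>i=1..n. (if y i = j then ee n f i else 0))"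
proof (induction n)
  case 0 then show ?case by simp
next
  case (Suc n)
  have "(\<Sum>i=1..n. (if y i = j then ee (Suc n) f i else 0)) =
        (\<Sum>i=1..n. (if y i = j then ee n f i else 0)) - (if n \<ge> 1 \<and> y n = j then f (Suc n) else 0)"
  proof (cases "n \<ge> 1")
    case True
    have "(\<Sum>i=1..n. (if y i = j then ee (Suc n) f i else 0)) =
      (\<Sum>i=1..n. (if y i = j then ee n f i else 0) - (if i = n \<and> y n = j then f (Suc n) else 0))"
      by (rule sum.cong) (auto simp: ee_def)
    also have "\<dots> = (\<Sum>i=1..n. (if y i = j then ee n f i else 0)) - (\<Sum>i=1..n. (if i = n \<and> y n = j then f (Suc n) else 0))"
      by (rule sum_subtractf)
    also have "(\<Sum>i=1..n. (if i = n \<and> y n = j then f (Suc n) else 0)) = (if y n = j then f (Suc n) else 0)"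
      using True by (simp add: sum.delta[of "{1..n}" n "\<lambda>_. f (Suc n)", simplified] if_distrib cong: if_cong)
    finally show ?thesis using True by simp
  qed simp
  then show ?case using Suc by (auto simp: Wd_def ee_def algebra_simps)
qed

lemma esum: "n \<ge> 1 \<Longrightarrow> (\<Sum>i=1..n. ee n f i) = f 1"
proof (induction n rule: dec_induct)
  case base then show ?case by (simp add: ee_def)
next
  case (step n)
  have "(\<Sum>i=1..n. ee (Suc n) f i) = (\<Sum>i=1..n. ee n f i) - f (Suc n)"
  proof -
    have "(\<Sum>i=1..n. ee (Suc n) f i) = (\<Sum>i=1..n. ee n f i - (if i = n then f (Suc n) else 0))"
      by (rule sum.cong) (auto simp: ee_def)
    also have "\<dots> = (\<Sum>i=1..n. ee n f i) - f (Suc n)"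
      using step(1) by (simp add: sum_subtractf)
    finally show ?thesis .
  qed
  then show ?case using step by (simp add: ee_def)
qed

lemma classify:
  fixes f :: "nat \<Rightarrow> real"
  assumes m: "m \<in> {1..k}" and pos: "\<And>i. 0 < f i \<and> f i < 1"
    and mono: "\<And>i. i \<in> {1..<k} \<Longrightarrow> f (Suc i) \<le> f i"
    and fm: "f m \<ge> 3/4" and fm1: "m < k \<Longrightarrow> f (Suc m) \<le> 1/4" and j: "j \<noteq> y m"
  shows "(\<Sum>i=1..k. Wd y i j * f i) < (\<Sum>i=1..k. Wd y i (y m) * f i)"
proof -
  have e0: "\<And>i. i \<in> {1..k} \<Longrightarrow> 0 \<le> ee k f i"
    using mono pos by (auto simp: ee_def less_imp_le)
  have em: "ee k f m \<ge> 1/2" using fm fm1 by (auto simp: ee_def)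
  have k1: "k \<ge> 1" using m by auto
  have fin: "finite {1..k}" by simp
  have "(\<Sum>i=1..k. (if y i = j then ee k f i else 0)) \<le> (\<Sum>i\<in>{1..k}-{m}. ee k f i)"
  proof -
    have "(\<Sum>i=1..k. (if y i = j then ee k f i else 0)) = (\<Sum>i\<in>{1..k}-{m}. (if y i = j then ee k f i else 0))"
      using sum.remove[OF fin m, of "\<lambda>i. if y i = j then ee k f i else 0"] j by simp
    also have "\<dots> \<le> (\<Sum>i\<in>{1..k}-{m}. ee k f i)"
      by (rule sum_mono) (use e0 in auto)
    finally show ?thesis .
  qed
  also have "\<dots> = f 1 - ee k f m"
    using esum[OF k1, of f] sum.remove[OF fin m, of "ee k f"] by simp
  also have "\<dots> < ee k f m" using pos[of 1] em by simp
  also have "ee k f m \<le> (\<Sum>i=1..k. (if y i = y m then ee k f i else 0))"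
  proof -
    have "(\<Sum>i=1..k. (if y i = y m then ee k f i else 0)) = ee k f m + (\<Sum>i\<in>{1..k}-{m}. (if y i = y m then ee k f i else 0))"
      using sum.remove[OF fin m, of "\<lambda>i. if y i = y m then ee k f i else 0"] by simp
    moreover have "(\<Sum>i\<in>{1..k}-{m}. (if y i = y m then ee k f i else 0)) \<ge> 0"
      by (rule sum_nonneg) (use e0 in auto)
    ultimately show ?thesis by simp
  qed
  finally show ?thesis by (simp only: ident)
qed

lemma sig_bounds: "0 < sigmoid t" "sigmoid t < 1"
  by (auto simp: sigmoid_def add_pos_pos)

lemma sig_mono: "s \<le> t \<Longrightarrow> sigmoid s \<le> sigmoid t"
  unfolding sigmoid_def by (auto intro!: divide_left_mono mult_pos_pos add_pos_pos)

lemma sig2: "t \<ge> 2 \<Longrightarrow> sigmoid t \<ge> 3/4"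
proof -
  assume t: "t \<ge> 2"
  have "exp (2::real) \<ge> 3" using exp_ge_add_one_self[of 2] by simp
  hence "exp (-2::real) \<le> 1/3" by (simp add: exp_minus field_simps)
  moreover have p: "0 < 1 + exp(-2::real)" by (simp add: add_pos_pos)
  ultimately have "sigmoid 2 \<ge> 3/4" by (simp add: sigmoid_def field_simps)
  thus ?thesis using sig_mono[OF t] by simp
qed

lemma sigm2: "t \<le> -2 \<Longrightarrow> sigmoid t \<le> 1/4"
proof -
  assume t: "t \<le> -2"
  have "exp (2::real) \<ge> 3" using exp_ge_add_one_self[of 2] by simp
  moreover have p: "0 < 1 + exp(2::real)" by (simp add: add_pos_pos)
  ultimately have "sigmoid (-2) \<le> 1/4" by (simp add: sigmoid_def field_simps)
  thus ?thesis using sig_mono[OF t] by simp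
qed

theorem corollary1:
  fixes D :: "((real^'d) \<times> nat) measure"
    and X :: "(real^'d) set" and c k :: nat and \<delta> :: real
  assumes "prob_space D"
    and "space D = X \<times> {1..c}"
    and "k_separable_margin D X c k \<delta>"
  shows "\<exists>(u::real^'d) (\<beta>::nat \<Rightarrow> real) (W::nat \<Rightarrow> nat \<Rightarrow> real).
           AE z in D.
             (let g = (\<lambda>j. \<Sum>i=1..k. W i j * sigmoid (u \<bullet> fst z - \<beta> i))
              in snd z \<in> {1..c} \<and> (\<forall>j\<in>{1..c}. j \<noteq> snd z \<longrightarrow> g j < g (snd z)))"
proof -
  from assms(3) have dpos: "\<delta> > 0" and "\<exists>(a::real^'d) (b::nat \<Rightarrow> real).
        norm a = 1 \<and> strict_mono_on {1..k+1} b \<and>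
        (\<forall>i\<in>{1..k}. \<exists>yi\<in>{1..c}.
            AE z in D. fst z \<in> slab X a b \<delta> i \<longrightarrow> snd z = yi) \<and>
        (AE z in D. fst z \<in> (\<Union>i\<in>{1..k}. slab X a b \<delta> i))"
    unfolding k_separable_margin_def by auto
  then obtain a b where bm: "strict_mono_on {1..k+1} b"
    and per: "\<forall>i\<in>{1..k}. \<exists>yi\<in>{1..c}. AE z in D. fst z \<in> slab X a b \<delta> i \<longrightarrow> snd z = yi"
    and un: "AE z in D. fst z \<in> (\<Union>i\<in>{1..k}. slab X a b \<delta> i)" by blast
  from per have "\<forall>i\<in>{1..k}. \<exists>yi. yi \<in> {1..c} \<and> (AE z in D. fst z \<in> slab X a b \<delta> i \<longrightarrow> snd z = yi)" by blast
  from bchoice[OF this] obtain y where y: "\<forall>i\<in>{1..k}. y i \<in> {1..c} \<and>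
      (AE z in D. fst z \<in> slab X a b \<delta> i \<longrightarrow> snd z = y i)" by blast
  have all: "AE z in D. \<forall>i\<in>{1..k}. fst z \<in> slab X a b \<delta> i \<longrightarrow> snd z = y i"
    using y by (subst AE_finite_all) auto
  define M where "M = 2 / \<delta>"
  have Md: "M * \<delta> = 2" using dpos by (simp add: M_def)
  have Mpos: "M > 0" using dpos by (simp add: M_def)
  show ?thesis
  proof (intro exI)
    show "AE z in D. (let g = (\<lambda>j. \<Sum>i=1..k. Wd y i j * sigmoid ((M *\<^sub>R a) \<bullet> fst z - (\<lambda>i. M * b i) i))
              in snd z \<in> {1..c} \<and> (\<forall>j\<in>{1..c}. j \<noteq> snd z \<longrightarrow> g j < g (snd z)))"
      using all un
    proof (eventually_elim)
      case (elim z)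
      then obtain m where m: "m \<in> {1..k}" and xs: "fst z \<in> slab X a b \<delta> m" by blast
      have sz: "snd z = y m" using elim m xs by blast
      define f where "f i = sigmoid ((M *\<^sub>R a) \<bullet> fst z - M * b i)" for i
      have f_eq: "f i = sigmoid (M * (a \<bullet> fst z - b i))" for i
        by (simp add: f_def algebra_simps)
      have t1: "b m + \<delta> < a \<bullet> fst z" and t2: "a \<bullet> fst z < b (Suc m) - \<delta>"
        using xs by (auto simp: slab_def)
      have cl: "(\<Sum>i=1..k. Wd y i j * f i) < (\<Sum>i=1..k. Wd y i (y m) * f i)" if "j \<noteq> y m" for j
      proof (rule classify[OF m])
        show "0 < f i \<and> f i < 1" for i using sig_bounds by (simp add: f_def)
        show "f (Suc i) \<le> f i" if "i \<in> {1..<k}" for i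
        proof -
          have "b i < b (Suc i)" using that by (intro strict_mono_onD[OF bm]) auto
          then show ?thesis unfolding f_eq using Mpos by (intro sig_mono mult_left_mono) auto
        qed
        show "f m \<ge> 3/4" unfolding f_eq
        proof (rule sig2)
          have "M * \<delta> \<le> M * (a \<bullet> fst z - b m)" using t1 Mpos by (intro mult_left_mono) auto
          then show "2 \<le> M * (a \<bullet> fst z - b m)" using Md by simp
        qed
        show "f (Suc m) \<le> 1/4" if "m < k" unfolding f_eq
        proof (rule sigm2)
          have "M * \<delta> \<le> M * (b (Suc m) - a \<bullet> fst z)" using t2 Mpos by (intro mult_left_mono) auto
          then show "M * (a \<bullet> fst z - b (Suc m)) \<le> -2" using Md by (simp add: algebra_simps)
        qed
        show "j \<noteq> y m" by fact
      qed
      show ?case using cl y m sz unfolding Let_def f_def by auto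
    qed
  qed
qed

end
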